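(* Fix an active search instance $(h^\star,\mathcal D)$ with $\Pr(V=1)>0$ and costs $c_{\mathrm{rew}},c_{\mathrm{ver}}>0$, and consider the class of streaming policies described in the context. Then there exists a unique $\tau^\star\in(0,1)$ satisfying \[ c_{\mathrm{ver}}\,\mathbb E_{R\sim\mathcal D}\big[(h^\star(R)-\tau^\star)_+\big]=\tau^\star c_{\mathrm{rew}}, \] where $(u)_+=\max\{u,0\}$. Moreover, the optimal expected cost over streaming policies is $J^\star_{\mathrm{str}}(h^\star,\mathcal D)=c_{\mathrm{ver}}/\tau^\star$, and an optimal streaming policy is the threshold rule that verifies the current candidate with score $r$ if $h^\star(r)\ge\tau^\star$ and discards it if $h^\star(r)<\tau^\star$.
   Context: An active search instance $(h^\star,\mathcal D)$: $\mathcal D$ is a distribution on $\mathbb R$ and $h^\star:\mathbb R\to[0,1]$ measurable; a candidate has score $R\sim\mathcal D$ and label $V$ with $\Pr(V=1\mid R=r)=h^\star(r)$. A streaming policy (which knows $(\mathcal D,h^\star)$) proceeds in rounds $i=1,2,\dots$: it draws a fresh score $R_i\sim\mathcal D$ (independent of the past), pays $c_{\mathrm{rew}}$, observes $R_i$, then chooses, as a possibly randomized function of the past history and $R_i$, an action in $\{\text{discard},\text{verify}\}$. Discard removes the candidate permanently. Verify pays $c_{\mathrm{ver}}$ and reveals $V_i$ with $V_i\mid R_i\sim\mathrm{Bernoulli}(h^\star(R_i))$. The policy stops only when it verifies a candidate with $V_i=1$. $J^\star_{\mathrm{str}}(h^\star,\mathcal D)$ is the infimum over streaming policies of the expected total cost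 (sum of all $c_{\mathrm{rew}}$ and $c_{\mathrm{ver}}$ payments until stopping). *)

theory Defs
  imports "HOL-Probability.Probability"
begin

text \<open>A (behavioural, possibly randomized) streaming policy: given the scores seen so far
  (list rs), the actions taken so far (list as; True = verify, False = discard; every verified
  candidate so far had label 0, since otherwise the process stopped) and the current score r,
  it returns the probability of verifying the current candidate.\<close>

definition streaming_policy :: "(real list \<Rightarrow> bool list \<Rightarrow> real \<Rightarrow> real) \<Rightarrow> bool" where
  "streaming_policy \<pi> \<longleftrightarrow>
     (\<forall>rs as r. 0 \<le> \<pi> rs as r \<and> \<pi> rs as r \<le> 1) \<and>
     (\<forall>as. (\<lambda>(x, r). \<pi> (map x [0..<length as]) as r)
              \<in> borel_measurable (PiM {..<length as} (\<lambda>_. borel) \<Otimes>\<^sub>M borel))"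

primrec str_cost_trunc ::
  "real measure \<Rightarrow> (real \<Rightarrow> real) \<Rightarrow> real \<Rightarrow> real \<Rightarrow> (real list \<Rightarrow> bool list \<Rightarrow> real \<Rightarrow> real)
   \<Rightarrow> nat \<Rightarrow> real list \<Rightarrow> bool list \<Rightarrow> ennreal" where
  "str_cost_trunc D h c_rew c_ver \<pi> 0 rs as = 0"
| "str_cost_trunc D h c_rew c_ver \<pi> (Suc k) rs as =
     ennreal c_rew +
     (\<integral>\<^sup>+ r. ennreal (\<pi> rs as r) *
                (ennreal c_ver + ennreal (1 - h r) * str_cost_trunc D h c_rew c_ver \<pi> k (rs @ [r]) (as @ [True]))
            + ennreal (1 - \<pi> rs as r) * str_cost_trunc D h c_rew c_ver \<pi> k (rs @ [r]) (as @ [False]) \<partial>D)"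

definition str_cost ::
  "real measure \<Rightarrow> (real \<Rightarrow> real) \<Rightarrow> real \<Rightarrow> real \<Rightarrow> (real list \<Rightarrow> bool list \<Rightarrow> real \<Rightarrow> real) \<Rightarrow> ennreal" where
  "str_cost D h c_rew c_ver \<pi> = (SUP k. str_cost_trunc D h c_rew c_ver \<pi> k [] [])"

definition J_str :: "real measure \<Rightarrow> (real \<Rightarrow> real) \<Rightarrow> real \<Rightarrow> real \<Rightarrow> ennreal" where
  "J_str D h c_rew c_ver = (INF \<pi> \<in> {\<pi>. streaming_policy \<pi>}. str_cost D h c_rew c_ver \<pi>)"

definition threshold_policy :: "(real \<Rightarrow> real) \<Rightarrow> real \<Rightarrow> real list \<Rightarrow> bool list \<Rightarrow> real \<Rightarrow> real" where
  "threshold_policy h \<tau> rs as r = (if h r \<ge> \<tau> then 1 else 0)"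

end

theory Submission imports Defs begin

locale asrch =
  fixes D :: "real measure" and h :: "real \<Rightarrow> real" and c_rew c_ver :: real
  assumes ps: "prob_space D" and sD: "sets D = sets borel"
    and hm: "h \<in> borel_measurable borel"
    and hb: "\<And>r. 0 \<le> h r \<and> h r \<le> 1"
    and cr: "c_rew > 0" and cv: "c_ver > 0"
begin

sublocale prob_space D by (rule ps)

definition psi :: "real \<Rightarrow> real" where "psi t = (\<integral>r. max (h r - t) 0 \<partial>D)"
definition MM :: "real \<Rightarrow> real" where "MM x = (\<integral>r. min (c_ver + (1 - h r) * x) x \<partial>D)"

lemma hD[measurable]: "h \<in> borel_measurable D"
  using hm measurable_cong_sets[OF sD refl] by blast

lemma hm'[measurable]: "h \<in> borel_measurable borel" by (rule hm)

lemma ennreal_lin: "0 \<le> a \<Longrightarrow> 0 \<le> c \<Longrightarrow> 0 \<le> G \<Longrightarrow> ennreal c + ennreal a * ennreal G = ennreal (c + a * G)"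
  by (simp add: ennreal_mult)

lemma int_bdd: "f \<in> borel_measurable D \<Longrightarrow> (\<And>r. \<bar>f r\<bar> \<le> (B::real)) \<Longrightarrow> integrable D f"
  by (intro integrable_const_bound[where B=B] AE_I2) auto

lemma int_max2: "integrable D (\<lambda>r. max (h r * x - c_ver) 0)"
proof (rule int_bdd[where B="\<bar>x\<bar> + c_ver"])
  fix r have "\<bar>h r * x\<bar> \<le> \<bar>x\<bar>" using hb[of r] by (simp add: abs_mult mult_left_le_one_le)
  then show "\<bar>max (h r * x - c_ver) 0\<bar> \<le> \<bar>x\<bar> + c_ver" using cv by (auto simp: abs_le_iff max_def)
qed auto

lemma int_psi: "integrable D (\<lambda>r. max (h r - t) 0)"
proof -
  have "\<bar>max (h r - t) 0\<bar> \<le> \<bar>t\<bar> + 1" for r using hb[of r] by (auto simp: abs_le_iff max_def)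
  then show ?thesis
    by (intro integrable_const_bound[where B="\<bar>t\<bar> + 1"] AE_I2) auto
qed

lemma int_MM: "integrable D (\<lambda>r. min (c_ver + (1 - h r) * x) x)"
proof -
  have "\<bar>min (c_ver + (1 - h r) * x) x\<bar> \<le> c_ver + 2 * \<bar>x\<bar>" for r
  proof -
    have "\<bar>(1 - h r) * x\<bar> \<le> \<bar>x\<bar>" using hb[of r] by (simp add: abs_mult mult_left_le_one_le)
    then show ?thesis using cv by (auto simp: min_def abs_le_iff)
  qed
  then show ?thesis
    by (intro integrable_const_bound[where B="c_ver + 2 * \<bar>x\<bar>"] AE_I2) auto
qed

lemma integral_const1: "(\<integral>r. c \<partial>D) = (c::real)"
  by (simp add: prob_space)

lemma MM_alt: "MM x = x - (\<integral>r. max (h r * x - c_ver) 0 \<partial>D)"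
proof -
  have "MM x = (\<integral>r. x - max (h r * x - c_ver) 0 \<partial>D)"
    unfolding MM_def by (rule Bochner_Integration.integral_cong) (auto simp: algebra_simps min_def max_def)
  also have "\<dots> = (\<integral>r. x \<partial>D) - (\<integral>r. max (h r * x - c_ver) 0 \<partial>D)"
    by (rule Bochner_Integration.integral_diff) (auto intro!: integrable_const
        simp: int_max2)
  finally show ?thesis by (simp add: prob_space)
qed

lemma int_le_shift:
  assumes "integrable D f" "integrable D g" "\<And>r. f r \<le> g r + c"
  shows "(\<integral>r. f r \<partial>D) \<le> (\<integral>r. g r \<partial>D) + (c::real)"
proof -
  have "(\<integral>r. f r \<partial>D) \<le> (\<integral>r. g r + c \<partial>D)"
    by (rule integral_mono) (use assms in auto)
  also have "\<dots> = (\<integral>r. g r \<partial>D) + c"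
    by (subst Bochner_Integration.integral_add) (use assms in \<open>auto simp: prob_space\<close>)
  finally show ?thesis .
qed

lemma psi_mono: "s \<le> t \<Longrightarrow> psi t \<le> psi s"
  unfolding psi_def by (rule integral_mono) (auto simp: int_psi)

lemma psi_lip: "1-lipschitz_on UNIV psi"
proof (rule lipschitz_onI)
  fix x y :: real
  have a: "psi x \<le> psi y + \<bar>x - y\<bar>" unfolding psi_def
    by (rule int_le_shift[OF int_psi int_psi]) (auto simp: max_def)
  have b: "psi y \<le> psi x + \<bar>x - y\<bar>" unfolding psi_def
    by (rule int_le_shift[OF int_psi int_psi]) (auto simp: max_def)
  show "dist (psi x) (psi y) \<le> 1 * dist x y" using a b by (simp add: dist_real_def abs_le_iff)
qed simp

lemma pt_min_lip: "min (c_ver + (1 - h r) * x) x \<le> min (c_ver + (1 - h r) * y) y + \<bar>x - y\<bar>"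
proof -
  have "(1 - h r) * x \<le> (1 - h r) * y + \<bar>x - y\<bar>"
  proof -
    have "(1 - h r) * (x - y) \<le> \<bar>x - y\<bar>"
    proof -
      have "(1 - h r) * (x - y) \<le> (1 - h r) * \<bar>x - y\<bar>" using hb[of r] by (intro mult_left_mono) auto
      also have "\<dots> \<le> \<bar>x - y\<bar>" using hb[of r] by (intro mult_left_le_one_le) auto
      finally show ?thesis .
    qed
    then show ?thesis by (simp add: algebra_simps)
  qed
  then show ?thesis by (auto simp: min_def)
qed

lemma MM_lip: "1-lipschitz_on UNIV MM"
proof (rule lipschitz_onI)
  fix x y :: real
  have a: "MM x \<le> MM y + \<bar>x - y\<bar>" unfolding MM_def
    by (rule int_le_shift) (auto simp: int_MM pt_min_lip)
  have b: "MM y \<le> MM x + \<bar>x - y\<bar>" unfolding MM_def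
    by (rule int_le_shift) (use pt_min_lip[of _ y x] in \<open>auto simp: int_MM abs_minus_commute\<close>)
  show "dist (MM x) (MM y) \<le> 1 * dist x y" using a b by (simp add: dist_real_def abs_le_iff)
qed simp

lemma MM_mono: "x \<le> y \<Longrightarrow> MM x \<le> MM y"
  unfolding MM_def
proof (rule integral_mono)
  fix r assume "x \<le> y"
  then have "(1 - h r) * x \<le> (1 - h r) * y" using hb[of r] by (intro mult_left_mono) auto
  then show "min (c_ver + (1 - h r) * x) x \<le> min (c_ver + (1 - h r) * y) y" using \<open>x \<le> y\<close> by (auto simp: min_def)
qed (auto simp: int_MM)

lemma MM_nonneg: "0 \<le> x \<Longrightarrow> 0 \<le> MM x"
  unfolding MM_def using hb cv by (intro integral_nonneg_AE AE_I2) (auto simp: min_def)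

lemma MM_0: "MM 0 = 0"
  unfolding MM_def using cv by (simp add: min_def)

lemma psi_0: "psi 0 = (\<integral>r. h r \<partial>D)"
proof -
  have "max (h r - 0) 0 = h r" for r using hb[of r] by simp
  then show ?thesis unfolding psi_def by simp
qed

lemma psi_1: "psi 1 = 0"
  unfolding psi_def using hb by (simp add: max_def)

lemma exists_tau:
  assumes "(\<integral>r. h r \<partial>D) > 0"
  shows "\<exists>\<tau>. \<tau> \<in> {0<..<1} \<and> c_ver * psi \<tau> = \<tau> * c_rew"
proof -
  let ?F = "\<lambda>t. c_ver * psi t - t * c_rew"
  have cont: "continuous_on {0..1} ?F"
    by (intro continuous_intros continuous_on_subset[OF lipschitz_on_continuous_on[OF psi_lip]]) auto
  have "?F 1 \<le> 0" using cr by (simp add: psi_1)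
  moreover have "0 \<le> ?F 0" using cv assms by (simp add: psi_0)
  ultimately obtain x where x: "0 \<le> x" "x \<le> 1" "?F x = 0"
    using IVT2'[of ?F 1 0 0, OF _ _ _ cont] by auto
  have "x \<noteq> 0" using x cv assms by (auto simp: psi_0)
  moreover have "x \<noteq> 1" using x cr by (auto simp: psi_1)
  ultimately show ?thesis using x by (intro exI[of _ x]) auto
qed

lemma unique_tau:
  assumes "c_ver * psi s = s * c_rew" "c_ver * psi t = t * c_rew"
  shows "s = t"
proof (rule ccontr)
  assume "s \<noteq> t"
  then consider "s < t" | "t < s" by linarith
  then show False
  proof cases
    case 1
    then have "psi t \<le> psi s" by (intro psi_mono) auto
    then have "c_ver * psi t \<le> c_ver * psi s" using cv by simp
    then show False using assms 1 cr by simp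
  next
    case 2
    then have "psi s \<le> psi t" by (intro psi_mono) auto
    then have "c_ver * psi s \<le> c_ver * psi t" using cv by simp
    then show False using assms 2 cr by simp
  qed
qed

lemma fixed_G:
  assumes t: "0 < t" "t < 1" "c_ver * psi t = t * c_rew"
  shows "c_rew + MM (c_ver / t) = c_ver / t"
proof -
  let ?G = "c_ver / t"
  have "(\<integral>r. max (h r * ?G - c_ver) 0 \<partial>D) = (\<integral>r. ?G * max (h r - t) 0 \<partial>D)"
  proof (rule Bochner_Integration.integral_cong)
    fix r
    have "h r * ?G - c_ver = ?G * (h r - t)" using t by (simp add: field_simps)
    moreover have "?G > 0" using t cv by simp
    ultimately have e: "h r * ?G - c_ver = ?G * (h r - t)" "?G > 0" by auto
    have m: "max (?G * (h r - t)) 0 = ?G * max (h r - t) 0"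
    proof (cases "h r \<le> t")
      case True
      have "?G * (h r - t) \<le> 0" using True e(2) by (intro mult_nonneg_nonpos) auto
      then have "max (?G * (h r - t)) 0 = 0" by (rule max_absorb2)
      moreover have "max (h r - t) 0 = 0" using True by simp
      ultimately show ?thesis by simp
    next
      case False
      have "?G * (h r - t) \<ge> 0" using False e(2) by (intro mult_nonneg_nonneg) auto
      then have "max (?G * (h r - t)) 0 = ?G * (h r - t)" by (rule max_absorb1)
      moreover have "max (h r - t) 0 = h r - t" using False by simp
      ultimately show ?thesis by simp
    qed
    show "max (h r * ?G - c_ver) 0 = ?G * max (h r - t) 0" by (subst e(1)) (rule m)
  qed simp
  also have "\<dots> = ?G * psi t" unfolding psi_def by simp
  also have "\<dots> = c_rew" using t cv by (simp add: field_simps)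
  finally show ?thesis by (simp add: MM_alt)
qed

primrec gg :: "nat \<Rightarrow> real" where
  "gg 0 = 0" | "gg (Suc k) = c_rew + MM (gg k)"

lemma gg_nonneg: "0 \<le> gg k"
proof (induction k)
  case (Suc k) then show ?case using MM_nonneg[OF Suc.IH] cr by simp
qed simp

lemma gg_inc: "gg k \<le> gg (Suc k)"
proof (induction k)
  case 0 then show ?case using cr MM_0 by simp
next
  case (Suc k) then show ?case using MM_mono by simp
qed

lemma gg_le: assumes t: "0 < t" "t < 1" "c_ver * psi t = t * c_rew"
  shows "gg k \<le> c_ver / t"
proof (induction k)
  case 0 then show ?case using t cv by simp
next
  case (Suc k)
  then have "MM (gg k) \<le> MM (c_ver / t)" by (rule MM_mono)
  then show ?case using fixed_G[OF t] by simp
qed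

lemma gg_lim: assumes t: "0 < t" "t < 1" "c_ver * psi t = t * c_rew"
  shows "\<exists>L. gg \<longlonglongrightarrow> L \<and> L \<ge> c_ver / t"
proof -
  have "incseq gg" using gg_inc by (simp add: incseq_SucI)
  then obtain L where L: "gg \<longlonglongrightarrow> L" "\<forall>i. gg i \<le> L"
    using incseq_convergent[of gg "c_ver / t"] gg_le[OF t] by blast
  have cM: "isCont MM L"
    using lipschitz_on_continuous_on[OF MM_lip] by (meson continuous_on_eq_continuous_at open_UNIV UNIV_I)
  have "(\<lambda>k. MM (gg k)) \<longlonglongrightarrow> MM L" by (rule isCont_tendsto_compose[OF cM L(1)])
  then have a: "(\<lambda>k. c_rew + MM (gg k)) \<longlonglongrightarrow> c_rew + MM L" by (rule tendsto_add[OF tendsto_const])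
  have b: "(\<lambda>k. gg (Suc k)) \<longlonglongrightarrow> L" using L(1) by (rule LIMSEQ_Suc)
  have "(\<lambda>k. gg (Suc k)) = (\<lambda>k. c_rew + MM (gg k))" by simp
  with a b have fxp: "L = c_rew + MM L" using LIMSEQ_unique by metis
  have Lpos: "L \<ge> c_rew" using L(2)[rule_format, of 1] MM_0 by simp
  have I: "(\<integral>r. max (h r * L - c_ver) 0 \<partial>D) = c_rew" using fxp MM_alt[of L] by simp
  have "c_ver / t \<le> L"
  proof (rule ccontr)
    assume "\<not> c_ver / t \<le> L"
    then have Lt: "L * t < c_ver" using t by (simp add: field_simps)
    have "c_rew \<le> (\<integral>r. L * max (h r - t) 0 \<partial>D)" unfolding I[symmetric]
    proof (rule integral_mono)
      fix r
      have "h r * L - c_ver \<le> L * (h r - t)" using Lt by (simp add: algebra_simps)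
      also have "\<dots> \<le> L * max (h r - t) 0" using Lpos cr by (intro mult_left_mono) auto
      finally show "max (h r * L - c_ver) 0 \<le> L * max (h r - t) 0" using Lpos cr by simp
    qed (auto simp: int_max2 int_psi)
    also have "\<dots> = L * psi t" unfolding psi_def by simp
    also have "\<dots> = L * t * c_rew / c_ver" using t cv by (simp add: field_simps)
    also have "\<dots> < c_rew" using Lt cr cv by (simp add: field_simps)
    finally show False by simp
  qed
  then show ?thesis using L(1) by blast
qed


lemma nn_MM: "0 \<le> x \<Longrightarrow> (\<integral>\<^sup>+ r. ennreal (min (c_ver + (1 - h r) * x) x) \<partial>D) = ennreal (MM x)"
  unfolding MM_def
proof (rule nn_integral_eq_integral[OF int_MM])
  assume "0 \<le> x"
  show "AE r in D. 0 \<le> min (c_ver + (1 - h r) * x) x"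
  proof (rule AE_I2)
    fix r show "0 \<le> min (c_ver + (1 - h r) * x) x" using hb[of r] cv \<open>0 \<le> x\<close> by simp
  qed
qed

lemma pt_lower:
  fixes p a g c :: real and T1 T2 :: ennreal
  assumes "0 \<le> p" "p \<le> 1" "0 \<le> a" "0 \<le> g" "0 \<le> c" "ennreal g \<le> T1" "ennreal g \<le> T2"
  shows "ennreal (min (c + a * g) g) \<le> ennreal p * (ennreal c + ennreal a * T1) + ennreal (1 - p) * T2"
proof -
  have cv: "min (c + a * g) g \<le> p * (c + a * g) + (1 - p) * g"
  proof -
    have "p * min (c + a * g) g \<le> p * (c + a * g)" using assms by (intro mult_left_mono) auto
    moreover have "(1 - p) * min (c + a * g) g \<le> (1 - p) * g" using assms by (intro mult_left_mono) auto
    ultimately show ?thesis by (simp add: algebra_simps)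
  qed
  have "ennreal (min (c + a * g) g) \<le> ennreal (p * (c + a * g) + (1 - p) * g)"
    using cv by (rule ennreal_leI)
  also have "\<dots> = ennreal p * (ennreal c + ennreal a * ennreal g) + ennreal (1 - p) * ennreal g"
    using assms by (simp add: ennreal_mult)
  also have "\<dots> \<le> ennreal p * (ennreal c + ennreal a * T1) + ennreal (1 - p) * T2"
    using assms by (intro add_mono mult_left_mono order_refl) auto
  finally show ?thesis .
qed

lemma lower:
  assumes pol: "streaming_policy \<pi>"
  shows "ennreal (gg k) \<le> str_cost_trunc D h c_rew c_ver \<pi> k rs as"
proof (induction k arbitrary: rs as)
  case 0 then show ?case by simp
next
  case (Suc k)
  have pb: "0 \<le> \<pi> rs as r" "\<pi> rs as r \<le> 1" for r using pol unfolding streaming_policy_def by auto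
  have "ennreal (gg (Suc k)) = ennreal c_rew + ennreal (MM (gg k))"
    using cr MM_nonneg[OF gg_nonneg] by simp
  also have "\<dots> = ennreal c_rew + (\<integral>\<^sup>+ r. ennreal (min (c_ver + (1 - h r) * gg k) (gg k)) \<partial>D)"
    by (simp add: nn_MM gg_nonneg)
  also have "\<dots> \<le> str_cost_trunc D h c_rew c_ver \<pi> (Suc k) rs as"
    unfolding str_cost_trunc.simps
    by (intro add_left_mono nn_integral_mono pt_lower pb Suc.IH gg_nonneg) (use hb cv in auto)
  finally show ?case .
qed

lemma upper:
  assumes t: "0 < t" "t < 1" "c_ver * psi t = t * c_rew"
  shows "str_cost_trunc D h c_rew c_ver (threshold_policy h t) k rs as \<le> ennreal (c_ver / t)"
proof (induction k arbitrary: rs as)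
  case 0 then show ?case by simp
next
  case (Suc k)
  let ?G = "c_ver / t"
  have Gpos: "0 \<le> ?G" using t cv by simp
  have pt: "ennreal (threshold_policy h t rs as r) *
                (ennreal c_ver + ennreal (1 - h r) * str_cost_trunc D h c_rew c_ver (threshold_policy h t) k (rs @ [r]) (as @ [True]))
            + ennreal (1 - threshold_policy h t rs as r) * str_cost_trunc D h c_rew c_ver (threshold_policy h t) k (rs @ [r]) (as @ [False])
        \<le> ennreal (min (c_ver + (1 - h r) * ?G) ?G)" for r
  proof (cases "t \<le> h r")
    case True
    have "c_ver + (1 - h r) * ?G \<le> ?G"
    proof -
      have "c_ver \<le> h r * ?G" using True t cv by (simp add: field_simps)
      then show ?thesis by (simp add: algebra_simps)
    qed
    then have m: "min (c_ver + (1 - h r) * ?G) ?G = c_ver + (1 - h r) * ?G" by simp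
    have "ennreal c_ver + ennreal (1 - h r) * str_cost_trunc D h c_rew c_ver (threshold_policy h t) k (rs @ [r]) (as @ [True])
        \<le> ennreal c_ver + ennreal (1 - h r) * ennreal ?G"
      by (intro add_left_mono mult_left_mono Suc.IH) auto
    also have "\<dots> = ennreal (c_ver + (1 - h r) * ?G)" using hb[of r] cv Gpos by (intro ennreal_lin) auto
    finally show ?thesis using True unfolding m threshold_policy_def by simp
  next
    case False
    have "?G < c_ver + (1 - h r) * ?G"
    proof -
      have "h r * ?G < c_ver" using False t cv by (simp add: field_simps)
      then show ?thesis by (simp add: algebra_simps)
    qed
    then have m: "min (c_ver + (1 - h r) * ?G) ?G = ?G" by simp
    show ?thesis using False Suc.IH unfolding m threshold_policy_def by simp
  qed
  have "str_cost_trunc D h c_rew c_ver (threshold_policy h t) (Suc k) rs as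
      \<le> ennreal c_rew + (\<integral>\<^sup>+ r. ennreal (min (c_ver + (1 - h r) * ?G) ?G) \<partial>D)"
    unfolding str_cost_trunc.simps by (intro add_left_mono nn_integral_mono pt)
  also have "\<dots> = ennreal c_rew + ennreal (MM ?G)" by (simp only: nn_MM[OF Gpos])
  also have "\<dots> = ennreal (c_rew + MM ?G)" using cr MM_nonneg[OF Gpos] by simp
  also have "\<dots> = ennreal ?G" using fixed_G[OF t] by simp
  finally show ?case .
qed

lemma thr_policy: "streaming_policy (threshold_policy h t)"
proof -
  have e: "(\<lambda>(x, r). if t \<le> h r then 1 else (0::real)) = (\<lambda>p. (\<lambda>r. if t \<le> h r then 1 else 0) (snd p))"
    by auto
  have m: "(\<lambda>r. if t \<le> h r then 1 else (0::real)) \<in> borel_measurable borel" by measurable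
  show ?thesis
    unfolding streaming_policy_def threshold_policy_def
    by (auto simp only: e intro!: measurable_compose[OF measurable_snd m]) auto
qed


lemma main_part:
  assumes t: "0 < t" "t < 1" "c_ver * psi t = t * c_rew"
  shows "J_str D h c_rew c_ver = ennreal (c_ver / t)
        \<and> streaming_policy (threshold_policy h t)
        \<and> str_cost D h c_rew c_ver (threshold_policy h t) = J_str D h c_rew c_ver"
proof -
  let ?G = "c_ver / t"
  obtain L where L: "gg \<longlonglongrightarrow> L" "L \<ge> ?G" using gg_lim[OF t] by blast
  have lowpol: "ennreal ?G \<le> str_cost D h c_rew c_ver \<pi>" if "streaming_policy \<pi>" for \<pi>
  proof -
    have "(\<lambda>k. ennreal (gg k)) \<longlonglongrightarrow> ennreal L" using L(1) by (rule tendsto_ennrealI)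
    moreover have "\<exists>N. \<forall>n\<ge>N. ennreal (gg n) \<le> str_cost D h c_rew c_ver \<pi>"
    proof (intro exI allI impI)
      fix n :: nat
      show "ennreal (gg n) \<le> str_cost D h c_rew c_ver \<pi>"
        unfolding str_cost_def by (rule SUP_upper2[where i=n and A=UNIV and f="\<lambda>k. str_cost_trunc D h c_rew c_ver \<pi> k [] []"]) (auto intro: lower[OF that])
    qed
    ultimately have "ennreal L \<le> str_cost D h c_rew c_ver \<pi>" by (rule LIMSEQ_le_const2)
    moreover have "ennreal ?G \<le> ennreal L" using L(2) by (rule ennreal_leI)
    ultimately show ?thesis by simp
  qed
  have J1: "ennreal ?G \<le> J_str D h c_rew c_ver"
    unfolding J_str_def by (intro INF_greatest lowpol) simp
  have up: "str_cost D h c_rew c_ver (threshold_policy h t) \<le> ennreal ?G"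
    unfolding str_cost_def by (intro SUP_least upper[OF t])
  have J2: "J_str D h c_rew c_ver \<le> str_cost D h c_rew c_ver (threshold_policy h t)"
    unfolding J_str_def by (intro INF_lower) (simp add: thr_policy)
  have e1: "str_cost D h c_rew c_ver (threshold_policy h t) = ennreal ?G"
    by (rule antisym[OF up order_trans[OF J1 J2]])
  have e2: "J_str D h c_rew c_ver = ennreal ?G"
    by (rule antisym[OF order_trans[OF J2 up] J1])
  show ?thesis using e1 e2 thr_policy by simp
qed

end

theorem lemma1:
  fixes D :: "real measure" and h :: "real \<Rightarrow> real" and c_rew c_ver :: real
  assumes "prob_space D" and "sets D = sets borel"
    and "h \<in> borel_measurable borel"
    and "\<And>r. 0 \<le> h r \<and> h r \<le> 1"
    and "(\<integral>r. h r \<partial>D) > 0"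
    and "c_rew > 0" and "c_ver > 0"
  shows "(\<exists>!\<tau>. \<tau> \<in> {0<..<1} \<and> c_ver * (\<integral>r. max (h r - \<tau>) 0 \<partial>D) = \<tau> * c_rew)
    \<and> (\<forall>\<tau>. \<tau> \<in> {0<..<1} \<and> c_ver * (\<integral>r. max (h r - \<tau>) 0 \<partial>D) = \<tau> * c_rew \<longrightarrow>
          J_str D h c_rew c_ver = ennreal (c_ver / \<tau>)
        \<and> streaming_policy (threshold_policy h \<tau>)
        \<and> str_cost D h c_rew c_ver (threshold_policy h \<tau>) = J_str D h c_rew c_ver)"
proof -
  interpret A: asrch D h c_rew c_ver
    by (rule asrch.intro) (rule assms)+
  have ex: "\<exists>\<tau>. \<tau> \<in> {0<..<1} \<and> c_ver * A.psi \<tau> = \<tau> * c_rew"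
    by (rule A.exists_tau) (use assms in auto)
  obtain t0 where t0: "t0 \<in> {0<..<1} \<and> c_ver * A.psi t0 = t0 * c_rew" using ex by blast
  have P1: "\<exists>!\<tau>. \<tau> \<in> {0<..<1} \<and> c_ver * A.psi \<tau> = \<tau> * c_rew"
  proof (rule ex1I[of _ t0])
    show "t0 \<in> {0<..<1} \<and> c_ver * A.psi t0 = t0 * c_rew" by (rule t0)
    fix y assume "y \<in> {0<..<1} \<and> c_ver * A.psi y = y * c_rew"
    then show "y = t0" using t0 A.unique_tau[of y t0] by blast
  qed
  have P2: "\<forall>\<tau>. \<tau> \<in> {0<..<1} \<and> c_ver * A.psi \<tau> = \<tau> * c_rew \<longrightarrow>
          J_str D h c_rew c_ver = ennreal (c_ver / \<tau>)
        \<and> streaming_policy (threshold_policy h \<tau>)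
        \<and> str_cost D h c_rew c_ver (threshold_policy h \<tau>) = J_str D h c_rew c_ver"
  proof (intro allI impI)
    fix \<tau> assume a: "\<tau> \<in> {0<..<1} \<and> c_ver * A.psi \<tau> = \<tau> * c_rew"
    show "J_str D h c_rew c_ver = ennreal (c_ver / \<tau>)
        \<and> streaming_policy (threshold_policy h \<tau>)
        \<and> str_cost D h c_rew c_ver (threshold_policy h \<tau>) = J_str D h c_rew c_ver"
      by (rule A.main_part) (use a in auto)
  qed
  show ?thesis using P1 P2 unfolding A.psi_def by (rule conjI)
qed

end
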